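(* A commutative semigroup variety $\mathcal V$ equals $\mathcal C_m$ for some integer $m\ge0$ if and only if $\mathcal V$ is combinatorial and, for all commutative semigroup varieties $\mathcal Y,\mathcal Z$ with $\mathcal Y$ a nil-variety and $\mathcal V=\mathcal Y\vee\mathcal Z$, one has $\mathcal V=\mathcal Z$.
   Context: For $m\ge1$, $\mathcal C_m=\operatorname{var}\{x^m=x^{m+1},\ xy=yx\}$, the variety generated by the cyclic monoid $\langle a\mid a^m=a^{m+1}\rangle$; $\mathcal C_0$ is the trivial variety. A semigroup variety is combinatorial if all groups in it are trivial; it is a nil-variety if all its semigroups are nil-semigroups. Joins are in the lattice of commutative semigroup varieties. *)

theory Defs
  imports Main
begin

datatype trm = Var nat | Mul trm trm

type_synonym ident = "trm \<times> trm"

fun eval :: "('a \<Rightarrow> 'a \<Rightarrow> 'a) \<Rightarrow> (nat \<Rightarrow> 'a) \<Rightarrow> trm \<Rightarrow> 'a" where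
  "eval f \<nu> (Var i) = \<nu> i"
| "eval f \<nu> (Mul s t) = f (eval f \<nu> s) (eval f \<nu> t)"

definition is_csg :: "'a set \<Rightarrow> ('a \<Rightarrow> 'a \<Rightarrow> 'a) \<Rightarrow> bool" where
  "is_csg A f \<longleftrightarrow> A \<noteq> {} \<and> (\<forall>a\<in>A. \<forall>b\<in>A. f a b \<in> A)
     \<and> (\<forall>a\<in>A. \<forall>b\<in>A. \<forall>c\<in>A. f (f a b) c = f a (f b c))
     \<and> (\<forall>a\<in>A. \<forall>b\<in>A. f a b = f b a)"

definition sat :: "'a set \<Rightarrow> ('a \<Rightarrow> 'a \<Rightarrow> 'a) \<Rightarrow> ident \<Rightarrow> bool" where
  "sat A f e \<longleftrightarrow> (\<forall>\<nu>. (\<forall>i. \<nu> i \<in> A) \<longrightarrow> eval f \<nu> (fst e) = eval f \<nu> (snd e))"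

text \<open>Carriers are taken inside nat (countable semigroups), which suffices since
  relatively free semigroups on countably many generators are countable.\<close>
definition model :: "nat set \<Rightarrow> (nat \<Rightarrow> nat \<Rightarrow> nat) \<Rightarrow> ident set \<Rightarrow> bool" where
  "model A f T \<longleftrightarrow> is_csg A f \<and> (\<forall>e\<in>T. sat A f e)"

definition closure :: "ident set \<Rightarrow> ident set" where
  "closure \<Sigma> = {e. \<forall>A f. model A f \<Sigma> \<longrightarrow> sat A f e}"

text \<open>A commutative semigroup variety, represented by its equational theory.\<close>
definition cvar :: "ident set \<Rightarrow> bool" where
  "cvar T \<longleftrightarrow> T = closure T"

text \<open>Join in the lattice of commutative semigroup varieties:
  Id(Y \<or> Z) = Id(Y) \<inter> Id(Z).\<close>
definition vjoin :: "ident set \<Rightarrow> ident set \<Rightarrow> ident set" where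
  "vjoin Y Z = Y \<inter> Z"

fun tpow :: "trm \<Rightarrow> nat \<Rightarrow> trm" where
  "tpow x 0 = x"
| "tpow x (Suc n) = Mul (tpow x n) x"
text \<open>tpow x n is x^(n+1).\<close>

text \<open>C_m = var{x^m = x^(m+1), xy = yx}; C_0 is trivial (all identities).\<close>
definition Cvar :: "nat \<Rightarrow> ident set" where
  "Cvar m = (if m = 0 then UNIV
             else closure {(tpow (Var 0) (m - 1), tpow (Var 0) m)})"

fun apow :: "('a \<Rightarrow> 'a \<Rightarrow> 'a) \<Rightarrow> 'a \<Rightarrow> nat \<Rightarrow> 'a" where
  "apow f a 0 = a"
| "apow f a (Suc n) = f (apow f a n) a"

definition is_group :: "'a set \<Rightarrow> ('a \<Rightarrow> 'a \<Rightarrow> 'a) \<Rightarrow> bool" where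
  "is_group A f \<longleftrightarrow> (\<exists>u\<in>A. (\<forall>a\<in>A. f u a = a \<and> f a u = a)
      \<and> (\<forall>a\<in>A. \<exists>b\<in>A. f a b = u \<and> f b a = u))"

definition combinatorial :: "ident set \<Rightarrow> bool" where
  "combinatorial T \<longleftrightarrow> (\<forall>A f. model A f T \<and> is_group A f \<longrightarrow> (\<exists>u. A = {u}))"

definition is_nil :: "'a set \<Rightarrow> ('a \<Rightarrow> 'a \<Rightarrow> 'a) \<Rightarrow> bool" where
  "is_nil A f \<longleftrightarrow> (\<exists>z\<in>A. (\<forall>a\<in>A. f z a = z \<and> f a z = z)
      \<and> (\<forall>a\<in>A. \<exists>n. apow f a n = z))"

definition nilvar :: "ident set \<Rightarrow> bool" where
  "nilvar T \<longleftrightarrow> (\<forall>A f. model A f T \<longrightarrow> is_nil A f)"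

end

theory Submission
  imports Defs "HOL-Library.Countable"
begin

fun subst :: "(nat \<Rightarrow> trm) \<Rightarrow> trm \<Rightarrow> trm" where
  "subst \<sigma> (Var i) = \<sigma> i"
| "subst \<sigma> (Mul s t) = Mul (subst \<sigma> s) (subst \<sigma> t)"

fun cnt :: "nat \<Rightarrow> trm \<Rightarrow> nat" where
  "cnt i (Var j) = (if i = j then 1 else 0)"
| "cnt i (Mul s t) = cnt i s + cnt i t"

fun sumv :: "(nat \<Rightarrow> nat) \<Rightarrow> trm \<Rightarrow> nat" where
  "sumv n (Var i) = n i"
| "sumv n (Mul s t) = sumv n s + sumv n t"

lemma csgD:
  assumes "is_csg A f"
  shows "A \<noteq> {}" "a \<in> A \<Longrightarrow> b \<in> A \<Longrightarrow> f a b \<in> A"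
    "a \<in> A \<Longrightarrow> b \<in> A \<Longrightarrow> c \<in> A \<Longrightarrow> f (f a b) c = f a (f b c)"
    "a \<in> A \<Longrightarrow> b \<in> A \<Longrightarrow> f a b = f b a"
  using assms unfolding is_csg_def by blast+

lemma csg_lc:
  assumes "is_csg A f" "a \<in> A" "b \<in> A" "c \<in> A"
  shows "f a (f b c) = f b (f a c)"
  using csgD[OF assms(1)] assms(2-4) by metis

lemma csg_4:
  assumes "is_csg A f" "p \<in> A" "q \<in> A" "r \<in> A" "s \<in> A"
  shows "f (f p q) (f r s) = f (f p r) (f q s)"
proof -
  have "f (f p q) (f r s) = f p (f q (f r s))" using csgD[OF assms(1)] assms by simp
  also have "\<dots> = f p (f r (f q s))" using csg_lc[OF assms(1)] assms by simp
  also have "\<dots> = f (f p r) (f q s)" using csgD[OF assms(1)] assms by simp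
  finally show ?thesis .
qed

lemma eval_in:
  assumes "is_csg A f" "\<forall>i. \<nu> i \<in> A"
  shows "eval f \<nu> t \<in> A"
  by (induction t) (use assms csgD in auto)

lemma apow_in:
  assumes "is_csg A f" "a \<in> A"
  shows "apow f a n \<in> A"
  by (induction n) (use assms csgD in auto)

lemma apow_add:
  assumes "is_csg A f" "a \<in> A"
  shows "f (apow f a p) (apow f a q) = apow f a (p + q + 1)"
proof (induction q)
  case 0 then show ?case by simp
next
  case (Suc q)
  have "f (apow f a p) (apow f a (Suc q)) = f (f (apow f a p) (apow f a q)) a"
    using csgD[OF assms(1)] apow_in[OF assms] assms(2) by simp
  also have "\<dots> = apow f a (p + Suc q + 1)" using Suc by simp
  finally show ?case .
qed

lemma eval_tpow: "eval f \<nu> (tpow s n) = apow f (eval f \<nu> s) n"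
  by (induction n) auto

lemma eval_subst: "eval f \<nu> (subst \<sigma> t) = eval f (\<lambda>i. eval f \<nu> (\<sigma> i)) t"
  by (induction t) auto

lemma sumv_pos: "(\<forall>i. n i \<ge> 1) \<Longrightarrow> sumv n t \<ge> 1"
  by (induction t) auto

lemma eval_pow:
  assumes "is_csg A f" "g \<in> A"
  shows "eval f (\<lambda>i. apow f g (n i)) t = apow f g (sumv (\<lambda>i. n i + 1) t - 1)"
proof (induction t)
  case (Var x) then show ?case by simp
next
  case (Mul s t)
  have p: "sumv (\<lambda>i. n i + 1) s \<ge> 1" "sumv (\<lambda>i. n i + 1) t \<ge> 1" by (rule sumv_pos, simp)+
  have "eval f (\<lambda>i. apow f g (n i)) (Mul s t) =
     f (apow f g (sumv (\<lambda>i. n i + 1) s - 1)) (apow f g (sumv (\<lambda>i. n i + 1) t - 1))"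
    using Mul by simp
  also have "\<dots> = apow f g (sumv (\<lambda>i. n i + 1) s - 1 + (sumv (\<lambda>i. n i + 1) t - 1) + 1)"
    by (rule apow_add[OF assms])
  also have "\<dots> = apow f g (sumv (\<lambda>i. n i + 1) (Mul s t) - 1)" using p
    by (intro arg_cong[where f="apow f g"]) simp
  finally show ?case .
qed

lemma eval_add:
  assumes h1: "\<And>a b. h (h a + b) = h (a + b)" and h2: "\<And>a b. h (a + h b) = h (a + b)"
    and hv: "\<And>i. h (\<nu> i) = \<nu> i"
  shows "eval (\<lambda>a b. h (a + b)) \<nu> t = h (sumv \<nu> t)"
proof (induction t)
  case (Var x) then show ?case using hv by simp
next
  case (Mul s t) then show ?case using h1 h2 by simp
qed

lemma sumv_subst: "sumv n (subst \<sigma> t) = sumv (\<lambda>j. sumv n (\<sigma> j)) t"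
  by (induction t) auto

lemma sumv_ind: "sumv (\<lambda>j. if j = i then 1 else 0) t = cnt i t"
  by (induction t) auto

lemma sumv_tpow: "sumv n (tpow s k) = (k + 1) * sumv n s"
  by (induction k) auto

lemma sumv_plus1: "sumv (\<lambda>i. n i + 1) t = sumv n t + sumv (\<lambda>i. 1) t"
  by (induction t) auto

lemma modelD: "model A f T \<Longrightarrow> is_csg A f" "model A f T \<Longrightarrow> e \<in> T \<Longrightarrow> sat A f e"
  unfolding model_def by auto
lemma model_sub: "model A f T \<Longrightarrow> S \<subseteq> T \<Longrightarrow> model A f S"
  unfolding model_def by blast

lemma closure_I: "(\<And>A f. model A f T \<Longrightarrow> sat A f e) \<Longrightarrow> e \<in> closure T"
  unfolding closure_def by blast

lemma closure_D: "e \<in> closure T \<Longrightarrow> model A f T \<Longrightarrow> sat A f e"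
  unfolding closure_def by blast

lemma sub_closure: "T \<subseteq> closure T"
  unfolding closure_def model_def by blast

lemma model_closure: "model A f T \<Longrightarrow> model A f (closure T)"
  unfolding model_def closure_def by blast

lemma closure_idem: "closure (closure T) = closure T"
  by (metis closure_D closure_I model_closure model_sub subsetI sub_closure subset_antisym)

lemma closure_mono: "S \<subseteq> T \<Longrightarrow> closure S \<subseteq> closure T"
  unfolding closure_def model_def by blast

lemma cvar_closure: "cvar (closure T)"
  unfolding cvar_def by (simp add: closure_idem)

lemma closure_csg:
  assumes "\<And>(A::nat set) f. is_csg A f \<Longrightarrow> sat A f e" shows "e \<in> closure T"
proof (rule closure_I)
  fix A f assume "model A f T" then show "sat A f e" using assms modelD by blast
qed


lemma satD: "sat A f e \<Longrightarrow> (\<forall>i. (\<nu>::nat \<Rightarrow> _) i \<in> A) \<Longrightarrow> eval f \<nu> (fst e) = eval f \<nu> (snd e)"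
  unfolding sat_def by blast

lemma cl_refl: "(t, t) \<in> closure T"
  by (rule closure_I) (simp add: sat_def)

lemma cl_sym: "(s, t) \<in> closure T \<Longrightarrow> (t, s) \<in> closure T"
  unfolding closure_def sat_def by auto

lemma cl_trans: "(s, t) \<in> closure T \<Longrightarrow> (t, r) \<in> closure T \<Longrightarrow> (s, r) \<in> closure T"
  unfolding closure_def sat_def by auto

lemma cl_mul: "(s, t) \<in> closure T \<Longrightarrow> (s', t') \<in> closure T \<Longrightarrow> (Mul s s', Mul t t') \<in> closure T"
  unfolding closure_def sat_def by auto

lemma cl_subst:
  assumes "(s, t) \<in> closure T"
  shows "(subst \<sigma> s, subst \<sigma> t) \<in> closure T"
proof (rule closure_I)
  fix A f assume m: "model A f T"
  show "sat A f (subst \<sigma> s, subst \<sigma> t)"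
    unfolding sat_def
  proof (intro allI impI)
    fix \<nu> :: "nat \<Rightarrow> nat" assume "\<forall>i. \<nu> i \<in> A"
    then have "\<forall>i. eval f \<nu> (\<sigma> i) \<in> A" using eval_in modelD(1)[OF m] by blast
    then show "eval f \<nu> (fst (subst \<sigma> s, subst \<sigma> t)) = eval f \<nu> (snd (subst \<sigma> s, subst \<sigma> t))"
      using closure_D[OF assms m] by (simp add: eval_subst sat_def)
  qed
qed

lemma cl_comm: "(Mul s t, Mul t s) \<in> closure T"
proof (rule closure_csg)
  fix A :: "nat set" and f assume c: "is_csg A f"
  show "sat A f (Mul s t, Mul t s)" unfolding sat_def
  proof (intro allI impI)
    fix \<nu> :: "nat \<Rightarrow> nat" assume nu: "\<forall>i. \<nu> i \<in> A"
    have "eval f \<nu> s \<in> A" "eval f \<nu> t \<in> A" using eval_in[OF c nu] by auto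
    then show "eval f \<nu> (fst (Mul s t, Mul t s)) = eval f \<nu> (snd (Mul s t, Mul t s))"
      using csgD(4)[OF c] by simp
  qed
qed

lemma cl_assoc: "(Mul (Mul s t) r, Mul s (Mul t r)) \<in> closure T"
proof (rule closure_csg)
  fix A :: "nat set" and f assume c: "is_csg A f"
  show "sat A f (Mul (Mul s t) r, Mul s (Mul t r))" unfolding sat_def
  proof (intro allI impI)
    fix \<nu> :: "nat \<Rightarrow> nat" assume nu: "\<forall>i. \<nu> i \<in> A"
    have "eval f \<nu> s \<in> A" "eval f \<nu> t \<in> A" "eval f \<nu> r \<in> A" using eval_in[OF c nu] by auto
    then show "eval f \<nu> (fst (Mul (Mul s t) r, Mul s (Mul t r))) = eval f \<nu> (snd (Mul (Mul s t) r, Mul s (Mul t r)))"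
      using csgD(3)[OF c] by simp
  qed
qed


instance trm :: countable by countable_datatype

definition rp :: "ident set \<Rightarrow> trm \<Rightarrow> trm" where "rp T t = (SOME s. (t, s) \<in> T)"
definition fcar :: "ident set \<Rightarrow> nat set" where "fcar T = range (\<lambda>t. to_nat (rp T t))"
definition fop :: "ident set \<Rightarrow> nat \<Rightarrow> nat \<Rightarrow> nat" where
  "fop T a b = to_nat (rp T (Mul (from_nat a) (from_nat b)))"

context fixes T :: "ident set" assumes cT: "cvar T"
begin

lemma cT': "closure T = T" using cT unfolding cvar_def by simp

lemma T_refl: "(t, t) \<in> T" using cl_refl cT' by metis
lemma T_sym: "(s, t) \<in> T \<Longrightarrow> (t, s) \<in> T" using cl_sym cT' by metis
lemma T_trans: "(s, t) \<in> T \<Longrightarrow> (t, r) \<in> T \<Longrightarrow> (s, r) \<in> T" using cl_trans cT' by metis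
lemma T_mul: "(s, t) \<in> T \<Longrightarrow> (s', t') \<in> T \<Longrightarrow> (Mul s s', Mul t t') \<in> T" using cl_mul cT' by metis
lemma T_subst: "(s, t) \<in> T \<Longrightarrow> (subst \<sigma> s, subst \<sigma> t) \<in> T" using cl_subst cT' by metis
lemma T_comm: "(Mul s t, Mul t s) \<in> T" using cl_comm cT' by metis
lemma T_assoc: "(Mul (Mul s t) r, Mul s (Mul t r)) \<in> T" using cl_assoc cT' by metis

lemma rp1: "(t, rp T t) \<in> T"
  unfolding rp_def by (rule someI[of _ t]) (rule T_refl)

lemma rp_eq: "(s, t) \<in> T \<Longrightarrow> rp T s = rp T t"
proof -
  assume st: "(s, t) \<in> T"
  have "(\<lambda>x. (s, x) \<in> T) = (\<lambda>x. (t, x) \<in> T)"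
    using st T_sym T_trans by blast
  then show ?thesis unfolding rp_def by simp
qed

lemma rp_eqD: "rp T s = rp T t \<Longrightarrow> (s, t) \<in> T"
  by (metis rp1 T_sym T_trans)

lemma rp_idem: "rp T (rp T t) = rp T t"
  using rp1 rp_eq T_sym by metis

lemma fop_rp: "fop T (to_nat (rp T s)) (to_nat (rp T t)) = to_nat (rp T (Mul s t))"
  unfolding fop_def
  using rp_eq[OF T_mul[OF T_sym[OF rp1] T_sym[OF rp1]]] by simp

lemma eval_free: "eval (fop T) (\<lambda>i. to_nat (rp T (\<sigma> i))) t = to_nat (rp T (subst \<sigma> t))"
  by (induction t) (auto simp: fop_rp)

lemma apow_free: "apow (fop T) (to_nat (rp T s)) n = to_nat (rp T (tpow s n))"
  by (induction n) (auto simp: fop_rp)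

lemma fcar_rep: "a \<in> fcar T \<Longrightarrow> a = to_nat (rp T (from_nat a))"
  unfolding fcar_def using rp_idem by auto

lemma free_csg: "is_csg (fcar T) (fop T)"
  unfolding is_csg_def
proof (intro conjI ballI)
  show "fcar T \<noteq> {}" unfolding fcar_def by simp
next
  fix a b assume "a \<in> fcar T" "b \<in> fcar T"
  then show "fop T a b \<in> fcar T" unfolding fop_def fcar_def by auto
next
  fix a b c assume a: "a \<in> fcar T" and b: "b \<in> fcar T" and c: "c \<in> fcar T"
  obtain ta tb tc where abc: "a = to_nat (rp T ta)" "b = to_nat (rp T tb)" "c = to_nat (rp T tc)"
    using a b c unfolding fcar_def by auto
  have "fop T (fop T a b) c = to_nat (rp T (Mul (Mul ta tb) tc))"
    by (simp add: abc fop_rp)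
  also have "\<dots> = to_nat (rp T (Mul ta (Mul tb tc)))"
    using rp_eq[OF T_assoc] by simp
  also have "\<dots> = fop T a (fop T b c)"
    by (simp add: abc fop_rp)
  finally show "fop T (fop T a b) c = fop T a (fop T b c)" .
next
  fix a b assume a: "a \<in> fcar T" and b: "b \<in> fcar T"
  show "fop T a b = fop T b a" unfolding fop_def using rp_eq[OF T_comm] by simp
qed

lemma free_model: "model (fcar T) (fop T) T"
  unfolding model_def
proof (intro conjI ballI free_csg)
  fix e assume e: "e \<in> T"
  show "sat (fcar T) (fop T) e" unfolding sat_def
  proof (intro allI impI)
    fix \<nu> :: "nat \<Rightarrow> nat" assume nu: "\<forall>i. \<nu> i \<in> fcar T"
    define \<sigma> :: "nat \<Rightarrow> trm" where "\<sigma> i = from_nat (\<nu> i)" for i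
    have "\<nu> = (\<lambda>i. to_nat (rp T (\<sigma> i)))" using nu fcar_rep unfolding \<sigma>_def by auto
    moreover have "(subst \<sigma> (fst e), subst \<sigma> (snd e)) \<in> T" using T_subst[of "fst e" "snd e"] e by simp
    ultimately show "eval (fop T) \<nu> (fst e) = eval (fop T) \<nu> (snd e)"
      by (simp add: eval_free rp_eq)
  qed
qed

end

lemma nil_extract:
  assumes cY: "cvar Y" and nY: "nilvar Y"
  shows "\<exists>n. \<forall>w. (Mul (tpow (Var 1) n) w, tpow (Var 1) n) \<in> Y"
proof -
  have "is_nil (fcar Y) (fop Y)" using nY free_model[OF cY] unfolding nilvar_def by blast
  then obtain z where z: "z \<in> fcar Y" "\<forall>a\<in>fcar Y. fop Y z a = z"
    "\<forall>a\<in>fcar Y. \<exists>n. apow (fop Y) a n = z" unfolding is_nil_def by blast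
  obtain t0 where t0: "z = to_nat (rp Y t0)" using z(1) unfolding fcar_def by auto
  have "to_nat (rp Y (Var 1)) \<in> fcar Y" unfolding fcar_def by simp
  then obtain n where "apow (fop Y) (to_nat (rp Y (Var 1))) n = z" using z(3) by blast
  then have "rp Y (tpow (Var 1) n) = rp Y t0" using apow_free[OF cY] t0 by simp
  then have yn: "(tpow (Var 1) n, t0) \<in> Y" using rp_eqD[OF cY] by blast
  have "\<forall>w. (Mul (tpow (Var 1) n) w, tpow (Var 1) n) \<in> Y"
  proof
    fix w
    have "to_nat (rp Y w) \<in> fcar Y" unfolding fcar_def by simp
    then have "fop Y z (to_nat (rp Y w)) = z" using z(2) by blast
    then have "rp Y (Mul t0 w) = rp Y t0" using fop_rp[OF cY] t0 by simp
    then have "(Mul t0 w, t0) \<in> Y" using rp_eqD[OF cY] by blast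
    moreover have "(Mul (tpow (Var 1) n) w, Mul t0 w) \<in> Y" using T_mul[OF cY yn T_refl[OF cY]] .
    ultimately show "(Mul (tpow (Var 1) n) w, tpow (Var 1) n) \<in> Y"
      using T_trans[OF cY] T_sym[OF cY] yn by blast
  qed
  then show ?thesis by blast
qed


abbreviation xv where "xv \<equiv> Var 0"
abbreviation yv where "yv \<equiv> Var 1"

definition e0 :: "nat \<Rightarrow> ident" where "e0 m = (tpow xv (m - 1), tpow xv m)"

lemma Cvar_pos: "m \<ge> 1 \<Longrightarrow> Cvar m = closure {e0 m}"
  unfolding Cvar_def e0_def by simp

lemma add_csg:
  fixes h :: "nat \<Rightarrow> nat"
  assumes h1: "\<And>a b. h (h a + b) = h (a + b)" and h2: "\<And>a b. h (a + h b) = h (a + b)"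
    and cl: "\<And>a b. a \<in> A \<Longrightarrow> b \<in> A \<Longrightarrow> h (a + b) \<in> A" and ne: "A \<noteq> {}"
  shows "is_csg A (\<lambda>a b. h (a + b))"
  unfolding is_csg_def
proof (intro conjI ballI)
  fix a b c
  have "h (h (a + b) + c) = h (a + b + c)" by (rule h1)
  also have "\<dots> = h (a + (b + c))" by (simp only: add.assoc)
  also have "\<dots> = h (a + h (b + c))" by (rule h2[symmetric])
  finally show "h (h (a + b) + c) = h (a + h (b + c))" .
  show "h (a + b) = h (b + a)" by (simp only: add.commute)
qed (use ne cl in auto)

lemma Mk_csg: "is_csg {..k::nat} (\<lambda>a b. min k (a + b))"
  by (rule add_csg) (auto simp: min_def)

lemma Mk_eval: "(\<forall>i. \<nu> i \<le> (k::nat)) \<Longrightarrow> eval (\<lambda>a b. min k (a + b)) \<nu> t = min k (sumv \<nu> t)"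
  by (rule eval_add) auto

lemma Mk_model: assumes "k \<ge> 1" shows "model {..k} (\<lambda>a b. min k (a + b)) (Cvar k)"
proof -
  have "model {..k} (\<lambda>a b. min k (a + b)) {e0 k}"
    unfolding model_def
  proof (intro conjI Mk_csg ballI)
    fix e assume "e \<in> {e0 k}"
    then show "sat {..k} (\<lambda>a b. min k (a + b)) e"
      unfolding sat_def
    proof (intro allI impI)
      fix \<nu> :: "nat \<Rightarrow> nat" assume nu: "\<forall>i. \<nu> i \<in> {..k}" "e \<in> {e0 k}"
      have "min k (k * \<nu> 0) = min k ((k + 1) * \<nu> 0)"
      proof (cases "\<nu> 0")
        case 0 then show ?thesis by simp
      next
        case (Suc n) then show ?thesis by (simp add: min_def)
      qed
      then show "eval (\<lambda>a b. min k (a + b)) \<nu> (fst e) = eval (\<lambda>a b. min k (a + b)) \<nu> (snd e)"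
        using nu assms by (simp add: Mk_eval e0_def sumv_tpow)
    qed
  qed
  then show ?thesis using Cvar_pos[OF assms] model_closure by simp
qed

lemma Mk_ind: "k \<ge> 1 \<Longrightarrow> eval (\<lambda>a b. min k (a + b)) (\<lambda>j. if j = i then 1 else 0) t = min k (cnt i t)"
  by (subst Mk_eval) (auto simp: sumv_ind)

lemma Zd_csg: "(d::nat) \<ge> 1 \<Longrightarrow> is_csg {..<d} (\<lambda>a b. (a + b) mod d)"
  by (rule add_csg) (auto simp: mod_add_left_eq mod_add_right_eq dest: equals0D[where a=0])

lemma Zd_eval: "(\<forall>i. \<nu> i < (d::nat)) \<Longrightarrow> eval (\<lambda>a b. (a + b) mod d) \<nu> t = sumv \<nu> t mod d"
  by (rule eval_add) (auto simp: mod_add_left_eq mod_add_right_eq)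

lemma Zd_group: fixes d :: nat assumes d: "d \<ge> 2" shows "is_group {..<d} (\<lambda>a b. (a + b) mod d)"
  unfolding is_group_def
proof (rule bexI[of _ 0])
  show "0 \<in> {..<d}" using d by simp
  show "(\<forall>a\<in>{..<d}. (0 + a) mod d = a \<and> (a + 0) mod d = a) \<and>
    (\<forall>a\<in>{..<d}. \<exists>b\<in>{..<d}. (a + b) mod d = 0 \<and> (b + a) mod d = 0)"
  proof -
    have 1: "\<forall>a\<in>{..<d}. (0 + a) mod d = a \<and> (a + 0) mod d = a" by simp
    have 2: "\<forall>a\<in>{..<d}. \<exists>b\<in>{..<d}. (a + b) mod d = 0 \<and> (b + a) mod d = 0"
    proof
      fix a assume a: "a \<in> {..<d}"
      show "\<exists>b\<in>{..<d}. (a + b) mod d = 0 \<and> (b + a) mod d = 0"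
        using a d by (intro bexI[of _ "(d - a) mod d"]) (auto simp: mod_add_right_eq mod_add_left_eq)
    qed
    show ?thesis using 1 2 by blast
  qed
qed

fun del :: "nat \<Rightarrow> trm \<Rightarrow> trm option" where
  "del i (Var j) = (if i = j then None else Some (Var j))"
| "del i (Mul s t) = (case del i s of None \<Rightarrow> del i t
     | Some s' \<Rightarrow> (case del i t of None \<Rightarrow> Some s' | Some t' \<Rightarrow> Some (Mul s' t')))"

lemma del_None: "del i t = None \<longleftrightarrow> (\<forall>j. j \<noteq> i \<longrightarrow> cnt j t = 0)"
  by (induction t) (auto split: option.splits)

lemma del_Some: "del i t = Some t' \<Longrightarrow> cnt j t' = (if j = i then 0 else cnt j t)"
  by (induction t arbitrary: t') (auto split: option.splits if_splits simp: del_None)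

lemma cnt_ex: "\<exists>i. cnt i t > 0"
  by (induction t) auto

lemma cnt_fin: "finite {i. cnt i t > 0}"
proof (induction t)
  case (Var x) then show ?case by simp
next
  case (Mul s t)
  have "{i. cnt i (Mul s t) > 0} = {i. cnt i s > 0} \<union> {i. cnt i t > 0}" by auto
  then show ?case using Mul by simp
qed


lemma del_eval:
  assumes c: "is_csg A f" and nu: "\<forall>i. \<nu> i \<in> A"
  shows "(del i t = None \<longrightarrow> cnt i t \<ge> 1 \<and> eval f \<nu> t = apow f (\<nu> i) (cnt i t - 1)) \<and>
         (\<forall>t'. del i t = Some t' \<longrightarrow> eval f \<nu> t = (if cnt i t = 0 then eval f \<nu> t'
             else f (apow f (\<nu> i) (cnt i t - 1)) (eval f \<nu> t')))"
proof (induction t)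
  case (Var x) then show ?case by (cases "i = x") simp_all
next
  case (Mul s t)
  let ?a = "\<nu> i"
  have a: "?a \<in> A" using nu by blast
  note ev = eval_in[OF c nu]
  note ap = apow_in[OF c a]
  note C = csgD[OF c]
  show ?case
  proof (cases "del i s")
    case None
    then have s: "cnt i s \<ge> 1" "eval f \<nu> s = apow f ?a (cnt i s - 1)" using Mul.IH(1) by auto
    show ?thesis
    proof (cases "del i t")
      case None
      then have t: "cnt i t \<ge> 1" "eval f \<nu> t = apow f ?a (cnt i t - 1)" using Mul.IH(2) by auto
      have "eval f \<nu> (Mul s t) = apow f ?a (cnt i s - 1 + (cnt i t - 1) + 1)"
        using s t apow_add[OF c a] by simp
      also have "\<dots> = apow f ?a (cnt i (Mul s t) - 1)" using s t by (intro arg_cong[where f="apow f ?a"]) simp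
      finally show ?thesis using None \<open>del i s = None\<close> s t by simp
    next
      case (Some t')
      have t: "eval f \<nu> t = (if cnt i t = 0 then eval f \<nu> t' else f (apow f ?a (cnt i t - 1)) (eval f \<nu> t'))"
        using Mul.IH(2) Some by auto
      have "eval f \<nu> (Mul s t) = f (apow f ?a (cnt i (Mul s t) - 1)) (eval f \<nu> t')"
      proof (cases "cnt i t = 0")
        case True then show ?thesis using s t by simp
      next
        case False
        have "eval f \<nu> (Mul s t) = f (apow f ?a (cnt i s - 1)) (f (apow f ?a (cnt i t - 1)) (eval f \<nu> t'))"
          using s t False by simp
        also have "\<dots> = f (apow f ?a (cnt i s - 1 + (cnt i t - 1) + 1)) (eval f \<nu> t')"
          using C(3)[OF ap ap ev] apow_add[OF c a] by metis
        also have "\<dots> = f (apow f ?a (cnt i (Mul s t) - 1)) (eval f \<nu> t')"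
          using s False by (intro arg_cong[where f="\<lambda>n. f (apow f ?a n) (eval f \<nu> t')"]) simp
        finally show ?thesis .
      qed
      then show ?thesis using None Some s by simp
    qed
  next
    case (Some s')
    have s: "eval f \<nu> s = (if cnt i s = 0 then eval f \<nu> s' else f (apow f ?a (cnt i s - 1)) (eval f \<nu> s'))"
      using Mul.IH(1) Some by auto
    show ?thesis
    proof (cases "del i t")
      case None
      then have t: "cnt i t \<ge> 1" "eval f \<nu> t = apow f ?a (cnt i t - 1)" using Mul.IH(2) by auto
      have "eval f \<nu> (Mul s t) = f (apow f ?a (cnt i (Mul s t) - 1)) (eval f \<nu> s')"
      proof (cases "cnt i s = 0")
        case True then show ?thesis using s t C(4)[OF ev[of s'] ap[of "cnt i t - 1"]] by simp
      next
        case False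
        have "eval f \<nu> (Mul s t) = f (f (apow f ?a (cnt i s - 1)) (eval f \<nu> s')) (apow f ?a (cnt i t - 1))"
          using s t False by simp
        also have "\<dots> = f (f (apow f ?a (cnt i s - 1)) (apow f ?a (cnt i t - 1))) (eval f \<nu> s')"
          using C(3)[OF ap[of "cnt i s - 1"] ev[of s'] ap[of "cnt i t - 1"]]
            C(3)[OF ap[of "cnt i s - 1"] ap[of "cnt i t - 1"] ev[of s']]
            C(4)[OF ev[of s'] ap[of "cnt i t - 1"]] by simp
        also have "\<dots> = f (apow f ?a (cnt i s - 1 + (cnt i t - 1) + 1)) (eval f \<nu> s')"
          using apow_add[OF c a] by simp
        also have "\<dots> = f (apow f ?a (cnt i (Mul s t) - 1)) (eval f \<nu> s')"
          using t False by (intro arg_cong[where f="\<lambda>n. f (apow f ?a n) (eval f \<nu> s')"]) simp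
        finally show ?thesis .
      qed
      then show ?thesis using None Some t by simp
    next
      case (Some t')
      have t: "eval f \<nu> t = (if cnt i t = 0 then eval f \<nu> t' else f (apow f ?a (cnt i t - 1)) (eval f \<nu> t'))"
        using Mul.IH(2) Some by auto
      have "eval f \<nu> (Mul s t) = (if cnt i (Mul s t) = 0 then f (eval f \<nu> s') (eval f \<nu> t')
             else f (apow f ?a (cnt i (Mul s t) - 1)) (f (eval f \<nu> s') (eval f \<nu> t')))"
      proof (cases "cnt i s = 0"; cases "cnt i t = 0")
        assume "cnt i s = 0" "cnt i t = 0" then show ?thesis using s t by simp
      next
        assume h: "cnt i s = 0" "cnt i t \<noteq> 0"
        then show ?thesis using s t csg_lc[OF c ev[of s'] ap[of "cnt i t - 1"] ev[of t']] by simp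
      next
        assume h: "cnt i s \<noteq> 0" "cnt i t = 0"
        then show ?thesis using s t C(3)[OF ap[of "cnt i s - 1"] ev[of s'] ev[of t']] by simp
      next
        assume h: "cnt i s \<noteq> 0" "cnt i t \<noteq> 0"
        have "eval f \<nu> (Mul s t) = f (f (apow f ?a (cnt i s - 1)) (apow f ?a (cnt i t - 1))) (f (eval f \<nu> s') (eval f \<nu> t'))"
          using s t h csg_4[OF c ap[of "cnt i s - 1"] ev[of s'] ap[of "cnt i t - 1"] ev[of t']] by simp
        also have "\<dots> = f (apow f ?a (cnt i s - 1 + (cnt i t - 1) + 1)) (f (eval f \<nu> s') (eval f \<nu> t'))"
          by (simp only: apow_add[OF c a])
        also have "\<dots> = f (apow f ?a (cnt i (Mul s t) - 1)) (f (eval f \<nu> s') (eval f \<nu> t'))"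
          using h by (intro arg_cong[where f="\<lambda>n. f (apow f ?a n) (f (eval f \<nu> s') (eval f \<nu> t'))"]) simp
        finally show ?thesis using h by simp
      qed
      moreover have "del i (Mul s t) = Some (Mul s' t')" using \<open>del i s = Some s'\<close> Some by simp
      moreover have "eval f \<nu> (Mul s' t') = f (eval f \<nu> s') (eval f \<nu> t')" by simp
      ultimately show ?thesis by (simp del: eval.simps cnt.simps del.simps)
    qed
  qed
qed


lemma apow_stab:
  assumes c: "is_csg A f" and a: "a \<in> A" and per: "apow f a (m - 1) = apow f a m" and m: "m \<ge> 1"
  shows "n \<ge> m - 1 \<Longrightarrow> apow f a n = apow f a (m - 1)"
proof (induction n rule: dec_induct)
  case base then show ?case by simp
next
  case (step n)
  have "apow f a (Suc n) = f (apow f a n) a" by simp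
  also have "\<dots> = f (apow f a (m - 1)) a" using step by simp
  also have "\<dots> = apow f a m" using m by (cases m) auto
  finally show ?case using per by simp
qed

lemma pw_eq:
  assumes c: "is_csg A f" and a: "a \<in> A" and per: "apow f a (m - 1) = apow f a m" and m: "m \<ge> 1"
    and pq: "min m p = min m q" "p \<ge> 1" "q \<ge> 1"
  shows "apow f a (p - 1) = apow f a (q - 1)"
proof (cases "p = q")
  case False
  have "p \<ge> m \<and> q \<ge> m" using pq(1) False by (cases "p \<le> m"; cases "q \<le> m") (simp_all add: min.absorb1 min.absorb2)
  then have "p \<ge> m" "q \<ge> m" by auto
  have "apow f a (p - 1) = apow f a (m - 1)" by (rule apow_stab[OF c a per m]) (use \<open>p \<ge> m\<close> in simp)
  moreover have "apow f a (q - 1) = apow f a (m - 1)" by (rule apow_stab[OF c a per m]) (use \<open>q \<ge> m\<close> in simp)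
  ultimately show ?thesis by simp
qed simp

lemma N1_core:
  assumes c: "is_csg A f" and nu: "\<forall>i. \<nu> i \<in> A" and m: "m \<ge> 1"
    and per: "\<forall>a\<in>A. apow f a (m - 1) = apow f a m"
  shows "\<forall>u v. card {i. cnt i u > 0} = n \<longrightarrow> (\<forall>i. min m (cnt i u) = min m (cnt i v))
           \<longrightarrow> eval f \<nu> u = eval f \<nu> v"
proof (induction n rule: less_induct)
  case (less n)
  show ?case
  proof (intro allI impI)
    fix u v assume n: "card {i. cnt i u > 0} = n" and mn: "\<forall>i. min m (cnt i u) = min m (cnt i v)"
    have pos: "cnt j u > 0 \<longleftrightarrow> cnt j v > 0" for j
      using mn[rule_format, of j] m by (cases "cnt j u \<le> m"; cases "cnt j v \<le> m") (simp_all add: min.absorb1 min.absorb2)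
    obtain i where iu: "cnt i u > 0" using cnt_ex by blast
    have iv: "cnt i v > 0" using pos iu by blast
    have ai: "\<nu> i \<in> A" using nu by blast
    have peri: "apow f (\<nu> i) (m - 1) = apow f (\<nu> i) m" using per ai by blast
    note DE = del_eval[OF c nu, of i]
    show "eval f \<nu> u = eval f \<nu> v"
    proof (cases "del i u")
      case None
      have zu: "\<forall>j. j \<noteq> i \<longrightarrow> cnt j u = 0" using None del_None by blast
      have zv: "\<forall>j. j \<noteq> i \<longrightarrow> cnt j v = 0"
      proof (intro allI impI)
        fix j assume "j \<noteq> i"
        then have "\<not> cnt j u > 0" using zu by simp
        then show "cnt j v = 0" using pos[of j] by simp
      qed
      have nv: "del i v = None" using zv del_None by blast
      have eu: "eval f \<nu> u = apow f (\<nu> i) (cnt i u - 1)" using DE[of u] None by simp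
      have ev: "eval f \<nu> v = apow f (\<nu> i) (cnt i v - 1)" using DE[of v] nv by simp
      show ?thesis unfolding eu ev
        using pw_eq[OF c ai peri m mn[rule_format, of i]] iu iv by simp
    next
      case (Some u')
      have "del i v \<noteq> None"
      proof
        assume "del i v = None"
        then have zv: "\<forall>j. j \<noteq> i \<longrightarrow> cnt j v = 0" using del_None by blast
        have "\<forall>j. j \<noteq> i \<longrightarrow> cnt j u = 0"
        proof (intro allI impI)
          fix j assume "j \<noteq> i"
          then have "\<not> cnt j v > 0" using zv by simp
          then show "cnt j u = 0" using pos[of j] by simp
        qed
        then have "del i u = None" using del_None by blast
        then show False using Some by simp
      qed
      then obtain v' where v': "del i v = Some v'" by (cases "del i v") auto
      have cu': "cnt j u' = (if j = i then 0 else cnt j u)" for j using del_Some[OF Some] .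
      have cv': "cnt j v' = (if j = i then 0 else cnt j v)" for j using del_Some[OF v'] .
      have mn': "\<forall>j. min m (cnt j u') = min m (cnt j v')" using mn cu' cv' by simp
      have vs: "{j. cnt j u' > 0} = {j. cnt j u > 0} - {i}" using cu' by auto
      have cd: "card {j. cnt j u' > 0} < n"
        unfolding vs n[symmetric] using cnt_fin iu by (intro card_Diff1_less) auto
      have eq': "eval f \<nu> u' = eval f \<nu> v'" by (rule less.IH[rule_format, OF cd refl mn'[rule_format]])
      have eqp: "apow f (\<nu> i) (cnt i u - 1) = apow f (\<nu> i) (cnt i v - 1)"
        using pw_eq[OF c ai peri m mn[rule_format, of i]] iu iv by simp
      have eu: "eval f \<nu> u = f (apow f (\<nu> i) (cnt i u - 1)) (eval f \<nu> u')"
        using DE[of u] Some iu by simp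
      have ev: "eval f \<nu> v = f (apow f (\<nu> i) (cnt i v - 1)) (eval f \<nu> v')"
        using DE[of v] v' iv by simp
      show ?thesis unfolding eu ev eq' eqp ..
    qed
  qed
qed

lemma N1:
  assumes m: "m \<ge> 1" and mn: "\<forall>i. min m (cnt i u) = min m (cnt i v)"
  shows "(u, v) \<in> Cvar m"
  unfolding Cvar_pos[OF m]
proof (rule closure_I)
  fix A f assume mo: "model A f {e0 m}"
  have c: "is_csg A f" using modelD(1)[OF mo] .
  have per: "\<forall>a\<in>A. apow f a (m - 1) = apow f a m"
  proof
    fix a assume a: "a \<in> A"
    have "sat A f (e0 m)" using modelD(2)[OF mo] by simp
    then show "apow f a (m - 1) = apow f a m"
      using satD[of A f "e0 m" "\<lambda>_. a"] a by (simp add: e0_def eval_tpow)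
  qed
  show "sat A f (u, v)" unfolding sat_def
    using N1_core[OF c _ m per] mn by auto
qed


lemma cvar_UNIV: "cvar UNIV"
  unfolding cvar_def using sub_closure by blast

lemma Cvar_cvar: "cvar (Cvar m)"
  by (cases "m = 0") (auto simp: Cvar_def cvar_UNIV cvar_closure)

lemma Cvar_comb: "combinatorial (Cvar m)"
  unfolding combinatorial_def
proof (intro allI impI)
  fix A f assume h: "model A f (Cvar m) \<and> is_group A f"
  then have mo: "model A f (Cvar m)" and g: "is_group A f" by auto
  have c: "is_csg A f" using modelD(1)[OF mo] .
  obtain u where u: "u \<in> A" "\<forall>a\<in>A. f u a = a \<and> f a u = a" "\<forall>a\<in>A. \<exists>b\<in>A. f a b = u \<and> f b a = u"
    using g unfolding is_group_def by blast
  have "\<forall>a\<in>A. a = u"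
  proof (cases "m = 0")
    case True
    have s: "sat A f (Var 0, Var 1)" using modelD(2)[OF mo] True by (simp add: Cvar_def)
    show ?thesis
    proof
      fix a assume a: "a \<in> A"
      show "a = u" using satD[OF s, of "\<lambda>i. if i = 0 then a else u"] a u(1) by simp
    qed
  next
    case False
    then have m: "m \<ge> 1" by simp
    have s: "sat A f (e0 m)" using modelD(2)[OF mo] Cvar_pos[OF m] sub_closure by blast
    show ?thesis
    proof
      fix a assume a: "a \<in> A"
      define w where "w = apow f a (m - 1)"
      have w: "w \<in> A" unfolding w_def using apow_in[OF c a] .
      have "apow f a (m - 1) = apow f a m" using satD[OF s, of "\<lambda>_. a"] a by (simp add: e0_def eval_tpow)
      also have "apow f a m = f (apow f a (m - 1)) a" using m by (cases m) auto
      finally have ww: "w = f w a" unfolding w_def .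
      obtain w' where w': "w' \<in> A" "f w' w = u" using u(3) w by blast
      have "u = f w' (f w a)" using w'(2) ww by simp
      also have "\<dots> = f (f w' w) a" using csgD(3)[OF c w'(1) w a] by simp
      also have "\<dots> = a" using w'(2) u(2) a by simp
      finally show "a = u" by simp
    qed
  qed
  then show "\<exists>u. A = {u}" using u(1) by blast
qed

lemma Mk_ind2:
  assumes m: "m \<ge> 1"
  shows "eval (\<lambda>a b. min m (a + b)) (\<lambda>j. if j = 0 then 1 else 0)
           (Mul (subst (\<lambda>j. if j = i then xv else yv) u) (tpow yv n)) = min m (cnt i u)"
proof -
  have fx: "(\<lambda>j. sumv (\<lambda>j. if j = 0 then 1 else 0) (if j = i then xv else yv)) = (\<lambda>j. if j = i then 1 else 0)"
    by auto
  have "eval (\<lambda>a b. min m (a + b)) (\<lambda>j. if j = 0 then 1 else 0)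
           (Mul (subst (\<lambda>j. if j = i then xv else yv) u) (tpow yv n))
      = min m (sumv (\<lambda>j. if j = 0 then 1 else 0) (Mul (subst (\<lambda>j. if j = i then xv else yv) u) (tpow yv n)))"
    by (rule Mk_eval) (use m in auto)
  also have "\<dots> = min m (cnt i u)"
    by (simp only: sumv.simps sumv_subst fx sumv_tpow) (simp add: sumv_ind)
  finally show ?thesis .
qed

lemma Cvar_irr:
  assumes cY: "cvar Y" and cZ: "cvar Z" and nY: "nilvar Y" and j: "Cvar m = vjoin Y Z"
  shows "Cvar m = Z"
proof (cases "m = 0")
  case True
  then show ?thesis using j by (auto simp: Cvar_def vjoin_def)
next
  case False
  then have m: "m \<ge> 1" by simp
  have "Z \<subseteq> Cvar m"
  proof
    fix e assume eZ: "e \<in> Z"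
    obtain u v where e: "e = (u, v)" by (cases e)
    have "\<forall>i. min m (cnt i u) = min m (cnt i v)"
    proof (rule ccontr)
      assume "\<not> (\<forall>i. min m (cnt i u) = min m (cnt i v))"
      then obtain i where ne: "min m (cnt i u) \<noteq> min m (cnt i v)" by blast
      obtain n where nn: "\<forall>w. (Mul (tpow yv n) w, tpow yv n) \<in> Y" using nil_extract[OF cY nY] by blast
      define \<sigma> where "\<sigma> = (\<lambda>j. if j = i then xv else yv)"
      define L where "L = Mul (subst \<sigma> u) (tpow yv n)"
      define R where "R = Mul (subst \<sigma> v) (tpow yv n)"
      have "(L, R) \<in> Z" unfolding L_def R_def
        by (rule T_mul[OF cZ T_subst[OF cZ] T_refl[OF cZ]]) (use eZ e in simp)
      moreover have "(L, R) \<in> Y"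
      proof -
        have "(L, tpow yv n) \<in> Y" unfolding L_def
          using T_trans[OF cY T_comm[OF cY] nn[rule_format]] .
        moreover have "(R, tpow yv n) \<in> Y" unfolding R_def
          using T_trans[OF cY T_comm[OF cY] nn[rule_format]] .
        ultimately show ?thesis using T_trans[OF cY] T_sym[OF cY] by blast
      qed
      ultimately have "(L, R) \<in> Cvar m" using j by (simp add: vjoin_def)
      then have "sat {..m} (\<lambda>a b. min m (a + b)) (L, R)"
        using closure_D[of "(L, R)" "Cvar m"] Mk_model[OF m] Cvar_cvar[of m] unfolding cvar_def by auto
      then have "eval (\<lambda>a b. min m (a + b)) (\<lambda>j. if j = 0 then 1 else 0) L
               = eval (\<lambda>a b. min m (a + b)) (\<lambda>j. if j = 0 then 1 else 0) R"
        using satD[of "{..m}" _ "(L, R)" "\<lambda>j. if j = 0 then 1 else 0"] m by simp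
      then show False unfolding L_def R_def \<sigma>_def using Mk_ind2[OF m] ne by simp
    qed
    then show "e \<in> Cvar m" using N1[OF m] e by simp
  qed
  then show ?thesis using j by (auto simp: vjoin_def)
qed


lemma mod_cancel_nat:
  assumes h: "((a::nat) + c) mod d = (b + c) mod d" shows "a mod d = b mod d"
proof -
  have "int ((a + c) mod d) = int ((b + c) mod d)" using h by simp
  then have "(int a + int c) mod int d = (int b + int c) mod int d" by (simp add: zmod_int)
  then have "int d dvd (int a + int c) - (int b + int c)" using mod_eq_dvd_iff by blast
  then have "int d dvd int a - int b" by simp
  then have "int a mod int d = int b mod int d" using mod_eq_dvd_iff by blast
  then have "int (a mod d) = int (b mod d)" by (simp add: zmod_int)
  then show ?thesis by simp
qed

lemma pow_subst_id:
  "(subst (\<lambda>i. tpow xv (n i)) t, tpow xv (sumv (\<lambda>i. n i + 1) t - 1)) \<in> closure T"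
proof (rule closure_csg)
  fix A :: "nat set" and f assume c: "is_csg A f"
  show "sat A f (subst (\<lambda>i. tpow xv (n i)) t, tpow xv (sumv (\<lambda>i. n i + 1) t - 1))"
    unfolding sat_def
  proof (intro allI impI)
    fix \<nu> :: "nat \<Rightarrow> nat" assume nu: "\<forall>i. \<nu> i \<in> A"
    have "\<nu> 0 \<in> A" using nu by blast
    then show "eval f \<nu> (fst (subst (\<lambda>i. tpow xv (n i)) t, tpow xv (sumv (\<lambda>i. n i + 1) t - 1))) =
      eval f \<nu> (snd (subst (\<lambda>i. tpow xv (n i)) t, tpow xv (sumv (\<lambda>i. n i + 1) t - 1)))"
      by (simp add: eval_subst eval_tpow eval_pow[OF c])
  qed
qed

definition Rp :: "ident set \<Rightarrow> nat \<Rightarrow> nat \<Rightarrow> bool" where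
  "Rp V a b \<longleftrightarrow> (tpow xv a, tpow xv b) \<in> V"

context fixes V :: "ident set" assumes cV: "cvar V"
begin

lemma R_refl: "Rp V a a" unfolding Rp_def using T_refl[OF cV] .
lemma R_sym: "Rp V a b \<Longrightarrow> Rp V b a" unfolding Rp_def using T_sym[OF cV] .
lemma R_trans: "Rp V a b \<Longrightarrow> Rp V b c \<Longrightarrow> Rp V a c" unfolding Rp_def using T_trans[OF cV] .

lemma R_shift: "Rp V a b \<Longrightarrow> Rp V (a + c) (b + c)"
proof (induction c)
  case 0 then show ?case by simp
next
  case (Suc c)
  then show ?case unfolding Rp_def using T_mul[OF cV _ T_refl[OF cV], of "tpow xv (a + c)" "tpow xv (b + c)" xv]
    by simp
qed

lemma R_of_V: "(u, v) \<in> V \<Longrightarrow> Rp V (sumv (\<lambda>i. n i + 1) u - 1) (sumv (\<lambda>i. n i + 1) v - 1)"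
proof -
  assume uv: "(u, v) \<in> V"
  have V': "closure V = V" using cV unfolding cvar_def by simp
  have 1: "(subst (\<lambda>i. tpow xv (n i)) u, tpow xv (sumv (\<lambda>i. n i + 1) u - 1)) \<in> V"
    using pow_subst_id[of n u V] V' by simp
  have 2: "(subst (\<lambda>i. tpow xv (n i)) v, tpow xv (sumv (\<lambda>i. n i + 1) v - 1)) \<in> V"
    using pow_subst_id[of n v V] V' by simp
  have 3: "(subst (\<lambda>i. tpow xv (n i)) u, subst (\<lambda>i. tpow xv (n i)) v) \<in> V"
    using T_subst[OF cV uv] .
  show ?thesis unfolding Rp_def using T_trans[OF cV T_trans[OF cV T_sym[OF cV 1] 3] 2] .
qed

lemma Zd_model:
  assumes d: "d \<ge> 2" and R: "\<forall>a b. Rp V a b \<longrightarrow> a mod d = b mod d"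
  shows "model {..<d} (\<lambda>a b. (a + b) mod d) V"
  unfolding model_def
proof (intro conjI ballI)
  show "is_csg {..<d} (\<lambda>a b. (a + b) mod d)" using Zd_csg d by simp
next
  fix e assume e: "e \<in> V"
  obtain u v where uv: "e = (u, v)" by (cases e)
  show "sat {..<d} (\<lambda>a b. (a + b) mod d) e" unfolding sat_def uv
  proof (intro allI impI)
    fix \<nu> :: "nat \<Rightarrow> nat" assume nu: "\<forall>i. \<nu> i \<in> {..<d}"
    have r1: "(sumv (\<lambda>i. \<nu> i + 1) u - 1) mod d = (sumv (\<lambda>i. \<nu> i + 1) v - 1) mod d"
      using R R_of_V[of u v \<nu>] e uv by blast
    have r2: "(sumv (\<lambda>i. (\<lambda>_. 0) i + 1) u - 1) mod d = (sumv (\<lambda>i. (\<lambda>_. 0) i + 1) v - 1) mod d"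
      using R R_of_V[of u v "\<lambda>_. 0"] e uv by blast
    have pu: "sumv (\<lambda>i. 1) u \<ge> 1" "sumv (\<lambda>i. 1) v \<ge> 1" by (rule sumv_pos, simp)+
    define p where "p = sumv (\<lambda>i. 1) u - 1"
    define q where "q = sumv (\<lambda>i. 1) v - 1"
    have r1': "(sumv \<nu> u + p) mod d = (sumv \<nu> v + q) mod d"
      using r1 pu unfolding sumv_plus1 p_def q_def by simp
    have r2': "p mod d = q mod d" using r2 unfolding p_def q_def by simp
    have "(sumv \<nu> u + q) mod d = (sumv \<nu> v + q) mod d"
      using r1' r2' by (metis mod_add_right_eq)
    then have "sumv \<nu> u mod d = sumv \<nu> v mod d" by (rule mod_cancel_nat)
    then show "eval (\<lambda>a b. (a + b) mod d) \<nu> (fst (u, v)) = eval (\<lambda>a b. (a + b) mod d) \<nu> (snd (u, v))"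
      using nu Zd_eval[of \<nu> d] by simp
  qed
qed

lemma not_comb_Zd:
  assumes comb: "combinatorial V" and d: "d \<ge> 2"
  shows "\<exists>a b. Rp V a b \<and> a mod d \<noteq> b mod d"
proof (rule ccontr)
  assume "\<not> ?thesis"
  then have "\<forall>a b. Rp V a b \<longrightarrow> a mod d = b mod d" by blast
  then have "model {..<d} (\<lambda>a b. (a + b) mod d) V" using Zd_model d by blast
  then obtain u where "{..<d} = {u}" using comb Zd_group[OF d] unfolding combinatorial_def by blast
  moreover have "0 \<in> {..<d}" "1 \<in> {..<d}" using d by auto
  ultimately show False by auto
qed

lemma R_iter: "Rp V P (P + d) \<Longrightarrow> Rp V P (P + q * d)"
proof (induction q)
  case 0 then show ?case using R_refl by simp
next
  case (Suc q)
  have "Rp V (P + q * d) (P + d + q * d)" using R_shift[OF Suc.prems] .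
  then have "Rp V (P + q * d) (P + Suc q * d)" by (simp add: algebra_simps)
  then show ?case using R_trans Suc by blast
qed

lemma periodic:
  assumes comb: "combinatorial V"
  shows "\<exists>p. Rp V p (Suc p)"
proof -
  let ?P = "\<lambda>e. e \<ge> 1 \<and> (\<exists>p. Rp V p (p + e))"
  have ex: "\<exists>e. ?P e"
  proof -
    obtain a b where ab: "Rp V a b" "a mod 2 \<noteq> b mod 2" using not_comb_Zd[OF comb, of 2] by auto
    show ?thesis
    proof (cases "a < b")
      case True
      then have "a + (b - a) = b" by simp
      then show ?thesis using ab True by (intro exI[of _ "b - a"] conjI exI[of _ a]) simp_all
    next
      case False
      then have "b < a" using ab by (cases "a = b") auto
      then have "b + (a - b) = a" by simp
      then show ?thesis using R_sym[OF ab(1)] \<open>b < a\<close> by (intro exI[of _ "a - b"] conjI exI[of _ b]) simp_all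
    qed
  qed
  define d where "d = (LEAST e. ?P e)"
  have Pd: "?P d" unfolding d_def using LeastI_ex[OF ex] .
  show ?thesis
  proof (cases "d = 1")
    case True then show ?thesis using Pd by auto
  next
    case False
    then have d2: "d \<ge> 2" using Pd by auto
    obtain p where p: "Rp V p (p + d)" using Pd by blast
    obtain a b where ab: "Rp V a b" "a mod d \<noteq> b mod d" using not_comb_Zd[OF comb d2] by blast
    obtain a' e where ae: "Rp V a' (a' + e)" "e mod d \<noteq> 0"
    proof (cases "a < b")
      case True
      have "b = a + (b - a)" using True by simp
      then have "(b - a) mod d \<noteq> 0" using ab(2) by (metis add.right_neutral mod_add_right_eq)
      then show ?thesis using that[of a "b - a"] ab(1) True by simp
    next
      case False
      then have "a = b + (a - b)" by simp
      then have "(a - b) mod d \<noteq> 0" using ab(2) by (metis add.right_neutral mod_add_right_eq)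
      then show ?thesis using that[of b "a - b"] R_sym[OF ab(1)] False by simp
    qed
    define P0 where "P0 = p + a'"
    have 1: "Rp V P0 (P0 + d)" using R_shift[OF p, of a'] unfolding P0_def by (simp add: algebra_simps)
    have 2: "Rp V P0 (P0 + e)" using R_shift[OF ae(1), of p] unfolding P0_def by (simp add: algebra_simps)
    define q where "q = e div d"
    define r where "r = e mod d"
    have er: "e = q * d + r" unfolding q_def r_def by simp
    have 3: "Rp V P0 (P0 + q * d)" using R_iter[OF 1] .
    have "Rp V (P0 + q * d) (P0 + q * d + r)"
      using R_trans[OF R_sym[OF 3] 2] er by (simp add: algebra_simps)
    then have "?P r" using ae(2) unfolding r_def by auto
    moreover have "r < d" unfolding r_def using d2 by simp
    ultimately show ?thesis using not_less_Least[of r ?P] unfolding d_def by blast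
  qed
qed

end


definition Pw :: "(nat \<Rightarrow> nat \<Rightarrow> nat) \<Rightarrow> nat \<Rightarrow> nat \<Rightarrow> nat" where "Pw f m c = apow f c (m - 1)"

definition Gf :: "(nat \<Rightarrow> nat \<Rightarrow> nat) \<Rightarrow> nat \<Rightarrow> nat \<Rightarrow> nat \<Rightarrow> nat" where
  "Gf f f0 a n = (case n of 0 \<Rightarrow> f0 | Suc n' \<Rightarrow> f f0 (apow f a n'))"

context fixes A :: "nat set" and f :: "nat \<Rightarrow> nat \<Rightarrow> nat" and m :: nat
  assumes c: "is_csg A f" and m: "m \<ge> 1" and per: "\<forall>a\<in>A. apow f a (m - 1) = apow f a m"
begin

lemma stab: assumes a: "a \<in> A" and n: "n \<ge> m - 1" shows "apow f a n = apow f a (m - 1)"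
proof -
  have pa: "apow f a (m - 1) = apow f a m" using per a by blast
  show ?thesis by (rule apow_stab[OF c a pa m n])
qed

lemma Pw_in: "x \<in> A \<Longrightarrow> Pw f m x \<in> A" unfolding Pw_def using apow_in[OF c] .

lemma Pw_idem: "x \<in> A \<Longrightarrow> f (Pw f m x) (Pw f m x) = Pw f m x"
proof -
  assume x: "x \<in> A"
  have "f (apow f x (m - 1)) (apow f x (m - 1)) = apow f x (m - 1 + (m - 1) + 1)" using apow_add[OF c x] .
  also have "\<dots> = apow f x (m - 1)" by (rule stab[OF x]) simp
  finally show ?thesis unfolding Pw_def .
qed

context fixes f0 assumes f0: "f0 \<in> A" and idem: "f f0 f0 = f0"
begin

lemma G_in: "a \<in> A \<Longrightarrow> Gf f f0 a n \<in> A"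
  unfolding Gf_def using f0 csgD(2)[OF c] apow_in[OF c] by (cases n) auto

lemma G_step: "a \<in> A \<Longrightarrow> Gf f f0 a (Suc n) = f (Gf f f0 a n) a"
proof (cases n)
  case 0 then show ?thesis by (simp add: Gf_def)
next
  case (Suc n')
  assume a: "a \<in> A"
  have "Gf f f0 a (Suc n) = f f0 (f (apow f a n') a)" using Suc by (simp add: Gf_def)
  also have "\<dots> = f (f f0 (apow f a n')) a" using csgD(3)[OF c f0 apow_in[OF c a] a] by simp
  finally show ?thesis using Suc by (simp add: Gf_def)
qed

lemma f0_absorb: "x \<in> A \<Longrightarrow> f f0 (f f0 x) = f f0 x"
  using csgD(3)[OF c f0 f0] idem by metis

lemma G_mul: "a \<in> A \<Longrightarrow> f (Gf f f0 a p) (Gf f f0 a q) = Gf f f0 a (p + q)"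
proof -
  assume a: "a \<in> A"
  show ?thesis
  proof (cases p)
    case 0
    then show ?thesis using idem f0_absorb apow_in[OF c a] by (cases q) (simp_all add: Gf_def)
  next
    case (Suc p')
    show ?thesis
    proof (cases q)
      case 0
      have "f (f f0 (apow f a p')) f0 = f f0 (f f0 (apow f a p'))"
        using csgD(4)[OF c _ f0] csgD(2)[OF c f0 apow_in[OF c a]] by blast
      then show ?thesis using Suc 0 f0_absorb apow_in[OF c a] by (simp add: Gf_def)
    next
      case (Suc q')
      have "f (f f0 (apow f a p')) (f f0 (apow f a q')) = f (f f0 f0) (f (apow f a p') (apow f a q'))"
        using csg_4[OF c f0 apow_in[OF c a] f0 apow_in[OF c a]] by simp
      also have "\<dots> = f f0 (apow f a (p' + q' + 1))" using idem apow_add[OF c a] by simp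
      finally show ?thesis using Suc \<open>p = Suc p'\<close> by (simp add: Gf_def)
    qed
  qed
qed

lemma G_eval:
  assumes a: "a \<in> A"
  shows "f f0 (eval f (\<lambda>j. if j = i then a else f0) t) = Gf f f0 a (cnt i t)"
proof (induction t)
  case (Var x)
  then show ?case using idem by (simp add: Gf_def)
next
  case (Mul s t)
  have nu: "\<forall>j. (if j = i then a else f0) \<in> A" using a f0 by simp
  note ev = eval_in[OF c nu]
  have "f f0 (eval f (\<lambda>j. if j = i then a else f0) (Mul s t)) =
      f (f f0 f0) (f (eval f (\<lambda>j. if j = i then a else f0) s) (eval f (\<lambda>j. if j = i then a else f0) t))"
    using idem by simp
  also have "\<dots> = f (f f0 (eval f (\<lambda>j. if j = i then a else f0) s)) (f f0 (eval f (\<lambda>j. if j = i then a else f0) t))"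
    using csg_4[OF c f0 f0 ev ev] by simp
  also have "\<dots> = Gf f f0 a (cnt i (Mul s t))" using Mul G_mul[OF a] by simp
  finally show ?case .
qed

lemma G_fact:
  assumes a: "a \<in> A" and eq: "Gf f f0 a k = Gf f f0 a k'" and kk: "k < k'"
  shows "Gf f f0 a k = Gf f f0 a (Suc k)"
proof -
  define D where "D = k' - k"
  have D: "D \<ge> 1" "k' = k + D" using kk unfolding D_def by auto
  have sh: "Gf f f0 a (k + j) = Gf f f0 a (k' + j)" for j
  proof (induction j)
    case 0 then show ?case using eq by simp
  next
    case (Suc j) then show ?case using G_step[OF a] by (metis add_Suc_right)
  qed
  have it: "Gf f f0 a (k + t * D) = Gf f f0 a k" for t
  proof (induction t)
    case 0 then show ?case by simp
  next
    case (Suc t)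
    have "Gf f f0 a (k + Suc t * D) = Gf f f0 a (k' + t * D)" using D(2) by (simp add: algebra_simps)
    also have "\<dots> = Gf f f0 a (k + t * D)" using sh[of "t * D"] by simp
    finally show ?case using Suc by simp
  qed
  have st: "n \<ge> m \<Longrightarrow> Gf f f0 a n = Gf f f0 a m" for n
  proof -
    assume n: "n \<ge> m"
    obtain n' where n': "n = Suc n'" using n m by (cases n) auto
    obtain m' where m': "m = Suc m'" using m by (cases m) auto
    have "apow f a n' = apow f a (m - 1)" by (rule stab[OF a]) (use n n' in simp)
    then show ?thesis using n' m' by (simp add: Gf_def)
  qed
  have "m * D \<ge> m" using D(1) by simp
  then have "Gf f f0 a (k + m * D) = Gf f f0 a m" by (intro st) linarith
  then have 1: "Gf f f0 a k = Gf f f0 a m" using it[of m] by simp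
  have "Gf f f0 a (Suc k) = f (Gf f f0 a (k + m * D)) a" using it[of m] G_step[OF a] by simp
  also have "\<dots> = Gf f f0 a (Suc (k + m * D))" using G_step[OF a] by simp
  also have "\<dots> = Gf f f0 a m" by (rule st) (use \<open>m * D \<ge> m\<close> in linarith)
  finally show ?thesis using 1 by simp
qed

lemma apow_f0: "b \<in> A \<Longrightarrow> apow f (f f0 b) n = f f0 (apow f b n)"
proof (induction n)
  case 0 then show ?case by simp
next
  case (Suc n)
  have "apow f (f f0 b) (Suc n) = f (f f0 (apow f b n)) (f f0 b)" using Suc by simp
  also have "\<dots> = f (f f0 f0) (f (apow f b n) b)" using csg_4[OF c f0 apow_in[OF c Suc.prems] f0 Suc.prems] by simp
  also have "\<dots> = f f0 (apow f b (Suc n))" using idem by simp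
  finally show ?case .
qed

lemma eval_f0: "\<forall>i. \<nu> i \<in> A \<Longrightarrow> eval f (\<lambda>i. f f0 (\<nu> i)) t = f f0 (eval f \<nu> t)"
proof (induction t)
  case (Var x) then show ?case by simp
next
  case (Mul s t)
  note ev = eval_in[OF c Mul.prems]
  have "eval f (\<lambda>i. f f0 (\<nu> i)) (Mul s t) = f (f f0 (eval f \<nu> s)) (f f0 (eval f \<nu> t))" using Mul by simp
  also have "\<dots> = f (f f0 f0) (f (eval f \<nu> s) (eval f \<nu> t))" using csg_4[OF c f0 ev f0 ev] by simp
  finally show ?case using idem by simp
qed

end
end


definition nilid :: "nat \<Rightarrow> ident" where "nilid m = (Mul xv (tpow yv (m - 1)), tpow yv (m - 1))"

definition Jset :: "nat set \<Rightarrow> (nat \<Rightarrow> nat \<Rightarrow> nat) \<Rightarrow> nat \<Rightarrow> nat set" where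
  "Jset A f m = {a \<in> A. \<exists>x\<in>A. f (Pw f m x) a = a}"
definition hh where "hh A f m z0 a = (if a \<in> Jset A f m then z0 else a)"
definition gg where "gg A f m z0 a b = hh A f m z0 (f a b)"
definition RA where "RA A f m z0 = (A - Jset A f m) \<union> {z0}"

context fixes A :: "nat set" and f :: "nat \<Rightarrow> nat \<Rightarrow> nat" and m :: nat and z0 :: nat
  assumes c: "is_csg A f" and m: "m \<ge> 1" and per: "\<forall>a\<in>A. apow f a (m - 1) = apow f a m"
    and z0: "z0 \<in> Jset A f m"
begin

abbreviation "J \<equiv> Jset A f m"
abbreviation "h \<equiv> hh A f m z0"
abbreviation "g \<equiv> gg A f m z0"
abbreviation "B \<equiv> RA A f m z0"

lemma J_sub: "J \<subseteq> A" unfolding Jset_def by auto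

lemma z0A: "z0 \<in> A" using z0 J_sub by blast

lemma J_ideal: "a \<in> J \<Longrightarrow> b \<in> A \<Longrightarrow> f a b \<in> J"
proof -
  assume a: "a \<in> J" and b: "b \<in> A"
  obtain x where x: "x \<in> A" "f (Pw f m x) a = a" "a \<in> A" using a unfolding Jset_def by blast
  have "f (Pw f m x) (f a b) = f (f (Pw f m x) a) b" using csgD(3)[OF c Pw_in[OF c m per x(1)] x(3) b] by simp
  then show ?thesis using x b csgD(2)[OF c] unfolding Jset_def by auto
qed

lemma J_ideal2: "a \<in> J \<Longrightarrow> b \<in> A \<Longrightarrow> f b a \<in> J"
  using J_ideal csgD(4)[OF c] J_sub by (metis subsetD)

lemma Pw_J: "x \<in> A \<Longrightarrow> Pw f m x \<in> J"
  unfolding Jset_def using Pw_in[OF c m per] Pw_idem[OF c m per] by blast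

lemma h_in: "a \<in> A \<Longrightarrow> h a \<in> B" unfolding hh_def RA_def by auto

lemma B_sub: "B \<subseteq> A" unfolding RA_def using z0A by auto

lemma h_fix: "a \<in> B \<Longrightarrow> h a = a" unfolding hh_def RA_def using z0 by auto

lemma hom: "a \<in> A \<Longrightarrow> b \<in> A \<Longrightarrow> h (f a b) = g (h a) (h b)"
proof -
  assume a: "a \<in> A" and b: "b \<in> A"
  show ?thesis
  proof (cases "a \<in> J \<or> b \<in> J")
    case True
    then have "f a b \<in> J" using J_ideal J_ideal2 a b by blast
    moreover have "f (h a) (h b) \<in> J"
      using True J_ideal[OF z0] J_ideal2[OF z0] h_in B_sub a b z0A unfolding hh_def by auto
    ultimately show ?thesis unfolding gg_def hh_def by simp
  next
    case False
    then show ?thesis unfolding gg_def hh_def by simp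
  qed
qed

lemma eval_hom: "\<forall>i. \<nu> i \<in> A \<Longrightarrow> eval g (\<lambda>i. h (\<nu> i)) t = h (eval f \<nu> t)"
proof (induction t)
  case (Var x) then show ?case by simp
next
  case (Mul s t)
  then show ?case using hom eval_in[OF c Mul.prems] by simp
qed

lemma B_csg: "is_csg B g"
  unfolding is_csg_def
proof (intro conjI ballI)
  show "B \<noteq> {}" unfolding RA_def by simp
next
  fix a b assume "a \<in> B" "b \<in> B"
  then show "g a b \<in> B" unfolding gg_def using h_in csgD(2)[OF c] B_sub by blast
next
  fix a b x assume a: "a \<in> B" and b: "b \<in> B" and x: "x \<in> B"
  have aA: "a \<in> A" and bA: "b \<in> A" and xA: "x \<in> A" using a b x B_sub by auto
  have "g (g a b) x = g (h (f a b)) (h x)" unfolding gg_def using h_fix[OF x] by simp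
  also have "\<dots> = h (f (f a b) x)" using hom[OF csgD(2)[OF c aA bA] xA] by simp
  also have "\<dots> = h (f a (f b x))" using csgD(3)[OF c aA bA xA] by simp
  also have "\<dots> = g (h a) (h (f b x))" using hom[OF aA csgD(2)[OF c bA xA]] by simp
  also have "\<dots> = g a (g b x)" unfolding gg_def using h_fix[OF a] by simp
  finally show "g (g a b) x = g a (g b x)" .
next
  fix a b assume a: "a \<in> B" and b: "b \<in> B"
  have "f a b = f b a" using csgD(4)[OF c] a b B_sub by blast
  then show "g a b = g b a" unfolding gg_def by simp
qed

lemma B_model: assumes mo: "model A f V" shows "model B g (V \<union> {nilid m})"
  unfolding model_def
proof (intro conjI B_csg ballI)
  fix e assume e: "e \<in> V \<union> {nilid m}"
  show "sat B g e" unfolding sat_def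
  proof (intro allI impI)
    fix \<nu> :: "nat \<Rightarrow> nat" assume nu: "\<forall>i. \<nu> i \<in> B"
    have nuA: "\<forall>i. \<nu> i \<in> A" using nu B_sub by blast
    have nuh: "(\<lambda>i. h (\<nu> i)) = \<nu>" using nu h_fix by auto
    have ev: "eval g \<nu> t = h (eval f \<nu> t)" for t using eval_hom[OF nuA, of t] nuh by simp
    show "eval g \<nu> (fst e) = eval g \<nu> (snd e)"
    proof (cases "e \<in> V")
      case True
      then show ?thesis using ev modelD(2)[OF mo True] satD nuA by metis
    next
      case False
      then have en: "e = nilid m" using e by blast
      have p: "apow f (\<nu> 1) (m - 1) \<in> J" using Pw_J[of "\<nu> 1"] nuA unfolding Pw_def by blast
      have "f (\<nu> 0) (apow f (\<nu> 1) (m - 1)) \<in> J" using J_ideal2[OF p] nuA by blast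
      then show ?thesis using p unfolding ev en nilid_def by (simp add: eval_tpow hh_def)
    qed
  qed
qed

end


lemma split_lemma:
  assumes cV: "cvar V" and m: "m \<ge> 1" and e0V: "e0 m \<in> V"
    and fact: "\<forall>A f. model A f V \<longrightarrow> (\<forall>x\<in>A. \<forall>a\<in>A. Gf f (Pw f m x) a k = Gf f (Pw f m x) a (Suc k))"
    and e2Y: "e2 \<in> closure (V \<union> {nilid m})" and e2k: "e2 \<in> Cvar k"
  shows "e2 \<in> V"
proof -
  have V': "closure V = V" using cV unfolding cvar_def by simp
  obtain u2 v2 where e2: "e2 = (u2, v2)" by (cases e2)
  have "e2 \<in> closure V"
  proof (rule closure_I)
    fix A f assume mo: "model A f V"
    have c: "is_csg A f" using modelD(1)[OF mo] .
    have per: "\<forall>a\<in>A. apow f a (m - 1) = apow f a m"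
    proof
      fix a assume a: "a \<in> A"
      show "apow f a (m - 1) = apow f a m"
        using satD[OF modelD(2)[OF mo e0V], of "\<lambda>_. a"] a by (simp add: e0_def eval_tpow)
    qed
    obtain x0 where x0: "x0 \<in> A" using csgD(1)[OF c] by blast
    define z0 where "z0 = Pw f m x0"
    have z0: "z0 \<in> Jset A f m" unfolding z0_def Jset_def
      using Pw_in[OF c m per x0] Pw_idem[OF c m per x0] x0 by blast
    show "sat A f e2" unfolding sat_def e2
    proof (intro allI impI)
      fix \<nu> :: "nat \<Rightarrow> nat" assume nu: "\<forall>i. \<nu> i \<in> A"
      define a' where "a' = eval f \<nu> u2"
      define b' where "b' = eval f \<nu> v2"
      have a'A: "a' \<in> A" and b'A: "b' \<in> A" unfolding a'_def b'_def using eval_in[OF c nu] by auto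
      have hab: "hh A f m z0 a' = hh A f m z0 b'"
      proof -
        have mB: "model (RA A f m z0) (gg A f m z0) (V \<union> {nilid m})" using B_model[OF c m per z0 mo] .
        have s: "sat (RA A f m z0) (gg A f m z0) e2" using closure_D[OF e2Y mB] .
        have nuB: "\<forall>i. hh A f m z0 (\<nu> i) \<in> RA A f m z0" using h_in[OF c m per z0] nu by blast
        show ?thesis using satD[OF s nuB] eval_hom[OF c m per z0 nu] unfolding e2 a'_def b'_def by simp
      qed
      have fab: "\<forall>x\<in>A. f (Pw f m x) a' = f (Pw f m x) b'"
      proof
        fix x assume x: "x \<in> A"
        define f0 where "f0 = Pw f m x"
        have f0A: "f0 \<in> A" unfolding f0_def using Pw_in[OF c m per x] .
        have idem: "f f0 f0 = f0" unfolding f0_def using Pw_idem[OF c m per x] .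
        have F: "\<forall>a\<in>A. Gf f f0 a k = Gf f f0 a (Suc k)" using fact mo x unfolding f0_def by blast
        show "f f0 a' = f f0 b'" unfolding f0_def[symmetric]
        proof (cases "k = 0")
          case True
          have "\<forall>b\<in>A. f f0 b = f0" using F True by (simp add: Gf_def)
          then show ?thesis using a'A b'A by simp
        next
          case False
          then have k: "k \<ge> 1" by simp
          define B' where "B' = (\<lambda>b. f f0 b) ` A"
          have B'A: "B' \<subseteq> A" unfolding B'_def using csgD(2)[OF c f0A] by blast
          have csg': "is_csg B' f"
            unfolding is_csg_def
          proof (intro conjI ballI)
            show "B' \<noteq> {}" unfolding B'_def using x by blast
          next
            fix p q assume p: "p \<in> B'" and q: "q \<in> B'"
            obtain p' q' where pq: "p' \<in> A" "q' \<in> A" "p = f f0 p'" "q = f f0 q'" using p q unfolding B'_def by blast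
            have "f p q = f (f f0 f0) (f p' q')" using csg_4[OF c f0A pq(1) f0A pq(2)] pq by simp
            then have "f p q = f f0 (f p' q')" using idem by simp
            then show "f p q \<in> B'" unfolding B'_def using csgD(2)[OF c pq(1) pq(2)] by blast
          next
            fix p q r assume "p \<in> B'" "q \<in> B'" "r \<in> B'"
            then show "f (f p q) r = f p (f q r)" using csgD(3)[OF c] B'A by blast
          next
            fix p q assume "p \<in> B'" "q \<in> B'"
            then show "f p q = f q p" using csgD(4)[OF c] B'A by blast
          qed
          have mo': "model B' f {e0 k}" unfolding model_def
          proof (intro conjI csg' ballI)
            fix e assume "e \<in> {e0 k}"
            then have ee: "e = e0 k" by simp
            show "sat B' f e" unfolding sat_def ee
            proof (intro allI impI)
              fix \<mu> :: "nat \<Rightarrow> nat" assume mu: "\<forall>i. \<mu> i \<in> B'"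
              obtain b where b: "b \<in> A" "\<mu> 0 = f f0 b" using mu unfolding B'_def by blast
              have "apow f (\<mu> 0) (k - 1) = f f0 (apow f b (k - 1))" using apow_f0[OF c m per f0A idem b(1)] b(2) by simp
              also have "\<dots> = Gf f f0 b k" using k by (cases k) (auto simp: Gf_def)
              also have "\<dots> = Gf f f0 b (Suc k)" using F b(1) by blast
              also have "\<dots> = apow f (\<mu> 0) k" using apow_f0[OF c m per f0A idem b(1)] b(2) by (simp add: Gf_def)
              finally show "eval f \<mu> (fst (e0 k)) = eval f \<mu> (snd (e0 k))" by (simp add: e0_def eval_tpow)
            qed
          qed
          then have "model B' f (Cvar k)" using Cvar_pos[OF k] model_closure by simp
          then have s: "sat B' f e2" using closure_D[of e2 "Cvar k"] e2k Cvar_cvar[of k] unfolding cvar_def by auto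
          have nuB: "\<forall>i. f f0 (\<nu> i) \<in> B'" unfolding B'_def using nu by blast
          show ?thesis using satD[OF s nuB] eval_f0[OF c m per f0A idem nu] unfolding e2 a'_def b'_def by simp
        qed
      qed
      show "eval f \<nu> (fst (u2, v2)) = eval f \<nu> (snd (u2, v2))"
      proof (cases "a' \<in> Jset A f m")
        case False
        then have "hh A f m z0 a' = a'" unfolding hh_def by simp
        moreover have "b' \<notin> Jset A f m"
        proof
          assume "b' \<in> Jset A f m"
          then have "a' = z0" using hab False unfolding hh_def by simp
          then show False using False z0 by simp
        qed
        ultimately show ?thesis using hab unfolding hh_def a'_def b'_def by simp
      next
        case True
        have "b' \<in> Jset A f m"
        proof (rule ccontr)
          assume "b' \<notin> Jset A f m"
          then have "b' = z0" using hab True unfolding hh_def by simp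
          then show False using \<open>b' \<notin> Jset A f m\<close> z0 by simp
        qed
        obtain xa where xa: "xa \<in> A" "f (Pw f m xa) a' = a'" using True unfolding Jset_def by blast
        obtain xb where xb: "xb \<in> A" "f (Pw f m xb) b' = b'" using \<open>b' \<in> Jset A f m\<close> unfolding Jset_def by blast
        have PA: "Pw f m xa \<in> A" "Pw f m xb \<in> A" using Pw_in[OF c m per] xa xb by auto
        have "a' = f (Pw f m xa) b'" using xa fab by simp
        also have "\<dots> = f (Pw f m xa) (f (Pw f m xb) b')" using xb by simp
        also have "\<dots> = f (Pw f m xb) (f (Pw f m xa) b')" using csg_lc[OF c PA(1) PA(2) b'A] by simp
        also have "\<dots> = f (Pw f m xb) a'" using xa fab by simp
        also have "\<dots> = b'" using xb fab by simp
        finally show ?thesis unfolding a'_def b'_def by simp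
      qed
    qed
  qed
  then show ?thesis using V' by simp
qed

lemma nil_Y: assumes m: "m \<ge> 1" shows "nilvar (closure (V \<union> {nilid m}))"
  unfolding nilvar_def
proof (intro allI impI)
  fix A f assume mo: "model A f (closure (V \<union> {nilid m}))"
  have c: "is_csg A f" using modelD(1)[OF mo] .
  have s: "sat A f (nilid m)" using modelD(2)[OF mo] sub_closure by blast
  have ab: "f a (apow f b (m - 1)) = apow f b (m - 1)" if "a \<in> A" "b \<in> A" for a b
    using satD[OF s, of "\<lambda>i. if i = 0 then a else b"] that by (simp add: nilid_def eval_tpow)
  have eq: "apow f a (m - 1) = apow f b (m - 1)" if a: "a \<in> A" and b: "b \<in> A" for a b
  proof -
    have 1: "apow f a (m - 1) \<in> A" "apow f b (m - 1) \<in> A" using apow_in[OF c] a b by auto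
    have "apow f b (m - 1) = f (apow f a (m - 1)) (apow f b (m - 1))" using ab[OF 1(1) b] by simp
    also have "\<dots> = f (apow f b (m - 1)) (apow f a (m - 1))" using csgD(4)[OF c 1(1) 1(2)] .
    also have "\<dots> = apow f a (m - 1)" using ab[OF 1(2) a] .
    finally show ?thesis by simp
  qed
  obtain b0 where b0: "b0 \<in> A" using csgD(1)[OF c] by blast
  show "is_nil A f" unfolding is_nil_def
  proof (intro bexI[of _ "apow f b0 (m - 1)"] conjI ballI)
    show "apow f b0 (m - 1) \<in> A" using apow_in[OF c b0] .
  next
    fix a assume a: "a \<in> A"
    show "f a (apow f b0 (m - 1)) = apow f b0 (m - 1)" using ab[OF a b0] .
    show "f (apow f b0 (m - 1)) a = apow f b0 (m - 1)"
      using ab[OF a b0] csgD(4)[OF c a apow_in[OF c b0]] by simp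
    show "\<exists>n. apow f a n = apow f b0 (m - 1)" using eq[OF a b0] by blast
  qed
qed

lemma minar: "min k (x::nat) = min k y \<Longrightarrow> min (Suc k) x \<noteq> min (Suc k) y \<Longrightarrow> x < y \<Longrightarrow> x = k"
  by (cases "x \<le> k"; cases "y \<le> k") (simp_all add: min.absorb1 min.absorb2)


lemma converse_dir:
  assumes cV: "cvar V" and comb: "combinatorial V"
    and irr: "\<forall>Y Z. cvar Y \<and> cvar Z \<and> nilvar Y \<and> V = vjoin Y Z \<longrightarrow> V = Z"
  shows "\<exists>m. V = Cvar m"
proof -
  have V': "closure V = V" using cV unfolding cvar_def by simp
  obtain p where p: "Rp V p (Suc p)" using periodic[OF cV comb] by blast
  define m where "m = Suc p"
  have m: "m \<ge> 1" unfolding m_def by simp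
  have e0V: "e0 m \<in> V" using p unfolding Rp_def e0_def m_def by simp
  have CmV: "Cvar m \<subseteq> V" unfolding Cvar_pos[OF m] using closure_mono[of "{e0 m}" V] e0V V' by auto
  define S where "S = {j. j \<le> m \<and> V \<subseteq> Cvar j}"
  have fS: "finite S" unfolding S_def by simp
  have 0: "0 \<in> S" unfolding S_def by (simp add: Cvar_def)
  define k where "k = Max S"
  have kS: "k \<in> S" unfolding k_def using Max_in[OF fS] 0 by blast
  then have km: "k \<le> m" and Vk: "V \<subseteq> Cvar k" unfolding S_def by auto
  show ?thesis
  proof (cases "k = m")
    case True
    then show ?thesis using Vk CmV by blast
  next
    case False
    then have km': "k < m" using km by simp
    have "Suc k \<notin> S" using Max_ge[OF fS, of "Suc k"] unfolding k_def[symmetric] by auto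
    then have "\<not> V \<subseteq> Cvar (Suc k)" using km' unfolding S_def by auto
    then obtain u v where uv: "(u, v) \<in> V" "(u, v) \<notin> Cvar (Suc k)" by auto
    obtain i where ne: "min (Suc k) (cnt i u) \<noteq> min (Suc k) (cnt i v)" using N1[of "Suc k" u v] uv(2) by auto
    have mk: "min k (cnt i u) = min k (cnt i v)"
    proof (cases "k = 0")
      case True then show ?thesis by simp
    next
      case False
      then have k1: "k \<ge> 1" by simp
      have "(u, v) \<in> Cvar k" using Vk uv(1) by blast
      then have "sat {..k} (\<lambda>a b. min k (a + b)) (u, v)"
        using closure_D[of "(u, v)" "Cvar k"] Mk_model[OF k1] Cvar_cvar[of k] unfolding cvar_def by auto
      then have "eval (\<lambda>a b. min k (a + b)) (\<lambda>j. if j = i then 1 else 0) u =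
                 eval (\<lambda>a b. min k (a + b)) (\<lambda>j. if j = i then 1 else 0) v"
        using satD[of "{..k}" _ "(u, v)" "\<lambda>j. if j = i then 1 else 0"] k1 by simp
      then show ?thesis using Mk_ind[OF k1] by simp
    qed
    obtain u' v' where uv': "(u', v') \<in> V" "cnt i u' = k" "cnt i v' > k"
    proof (cases "cnt i u < cnt i v")
      case True
      then have "cnt i u = k" using minar[OF mk ne] by blast
      then show ?thesis using that[of u v] uv(1) True by simp
    next
      case False
      then have "cnt i v < cnt i u" using ne by (cases "cnt i u = cnt i v") auto
      then have "cnt i v = k" using minar[OF mk[symmetric] ne[symmetric]] by blast
      then show ?thesis using that[of v u] T_sym[OF cV uv(1)] \<open>cnt i v < cnt i u\<close> by simp
    qed
    have fact: "\<forall>A f. model A f V \<longrightarrow> (\<forall>x\<in>A. \<forall>a\<in>A. Gf f (Pw f m x) a k = Gf f (Pw f m x) a (Suc k))"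
    proof (intro allI impI ballI)
      fix A f x a assume mo: "model A f V" and x: "x \<in> A" and a: "a \<in> A"
      have c: "is_csg A f" using modelD(1)[OF mo] .
      have per: "\<forall>a\<in>A. apow f a (m - 1) = apow f a m"
      proof
        fix a assume a: "a \<in> A"
        show "apow f a (m - 1) = apow f a m"
          using satD[OF modelD(2)[OF mo e0V], of "\<lambda>_. a"] a by (simp add: e0_def eval_tpow)
      qed
      define f0 where "f0 = Pw f m x"
      have f0A: "f0 \<in> A" unfolding f0_def using Pw_in[OF c m per x] .
      have idem: "f f0 f0 = f0" unfolding f0_def using Pw_idem[OF c m per x] .
      have nu: "\<forall>j. (if j = i then a else f0) \<in> A" using a f0A by simp
      have "eval f (\<lambda>j. if j = i then a else f0) u' = eval f (\<lambda>j. if j = i then a else f0) v'"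
        using satD[OF modelD(2)[OF mo uv'(1)] nu] by simp
      then have "Gf f f0 a (cnt i u') = Gf f f0 a (cnt i v')"
        using G_eval[OF c m per f0A idem a, of i u'] G_eval[OF c m per f0A idem a, of i v'] by simp
      then have "Gf f f0 a k = Gf f f0 a (cnt i v')" using uv'(2) by simp
      then show "Gf f (Pw f m x) a k = Gf f (Pw f m x) a (Suc k)"
        using G_fact[OF c m per f0A idem a _ uv'(3)] unfolding f0_def by blast
    qed
    define Y where "Y = closure (V \<union> {nilid m})"
    have cY: "cvar Y" unfolding Y_def by (rule cvar_closure)
    have nY: "nilvar Y" unfolding Y_def by (rule nil_Y[OF m])
    have VY: "V \<subseteq> Y" unfolding Y_def using sub_closure by blast
    have "V = vjoin Y (Cvar k)"
      unfolding vjoin_def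
    proof
      show "V \<subseteq> Y \<inter> Cvar k" using VY Vk by blast
      show "Y \<inter> Cvar k \<subseteq> V"
      proof
        fix e assume "e \<in> Y \<inter> Cvar k"
        then show "e \<in> V" using split_lemma[OF cV m e0V fact] unfolding Y_def by blast
      qed
    qed
    then have "V = Cvar k" using irr cY nY Cvar_cvar by blast
    then show ?thesis by blast
  qed
qed

theorem mainTheorem7:
  assumes "cvar V"
  shows "(\<exists>m. V = Cvar m) \<longleftrightarrow>
    (combinatorial V \<and>
     (\<forall>Y Z. cvar Y \<and> cvar Z \<and> nilvar Y \<and> V = vjoin Y Z \<longrightarrow> V = Z))"
proof
  assume "\<exists>m. V = Cvar m"
  then obtain m where V: "V = Cvar m" by blast
  show "combinatorial V \<and> (\<forall>Y Z. cvar Y \<and> cvar Z \<and> nilvar Y \<and> V = vjoin Y Z \<longrightarrow> V = Z)"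
    using Cvar_comb Cvar_irr V by blast
next
  assume "combinatorial V \<and> (\<forall>Y Z. cvar Y \<and> cvar Z \<and> nilvar Y \<and> V = vjoin Y Z \<longrightarrow> V = Z)"
  then show "\<exists>m. V = Cvar m" using converse_dir[OF assms] by blast
qed


end
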